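(* Let $\mathcal G$ be a $\sigma$-compact locally compact Hausdorff étale groupoid which is minimal. Then $\mathcal G$ is fiberwise amenable if and only if it is ubiquitously fiberwise amenable.
   Context: $AB=\{xy:x\in A,y\in B,s(x)=r(y)\}$, $Lu=\{x\in L:s(x)=u\}$. For $K,F\subseteq\mathcal G$: $\partial_KF=(KF\setminus F)\cup\{x\in F:yx\notin F\text{ for some }y\in K\text{ with }s(y)=r(x)\}$; a finite nonempty $F$ is $(K,\varepsilon)$-Følner if $|\partial_KF|\le\varepsilon|F|$. $\mathcal G$ is fiberwise amenable if for every compact $K\subseteq\mathcal G$ and $\varepsilon>0$ a $(K,\varepsilon)$-Følner set exists; it is ubiquitously fiberwise amenable if for every compact $K$ and $\varepsilon>0$ there is a compact $L\subseteq\mathcal G$ such that for every $u\in\mathcal G^{(0)}$ there is a $(K,\varepsilon)$-Følner set contained in $Lu\cup\{u\}$. Minimal: the only closed $D\subseteq\mathcal G^{(0)}$ with $r(\{x:s(x)\in D\})=D$ are $\emptyset$ and $\mathcal G^{(0)}$. *)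

theory Defs
  imports "HOL-Analysis.Analysis"
begin

text \<open>A groupoid is modelled on a whole type 'g (the arrows), with a set of composable
pairs G2 (= G^(2)), a multiplication gm (meaningful on G2) and an inverse gi,
satisfying Renault's axioms.\<close>

definition grd_r :: "('g \<Rightarrow> 'g \<Rightarrow> 'g) \<Rightarrow> ('g \<Rightarrow> 'g) \<Rightarrow> 'g \<Rightarrow> 'g" where
  "grd_r gm gi x = gm x (gi x)"

definition grd_s :: "('g \<Rightarrow> 'g \<Rightarrow> 'g) \<Rightarrow> ('g \<Rightarrow> 'g) \<Rightarrow> 'g \<Rightarrow> 'g" where
  "grd_s gm gi x = gm (gi x) x"

definition units :: "('g \<Rightarrow> 'g \<Rightarrow> 'g) \<Rightarrow> ('g \<Rightarrow> 'g) \<Rightarrow> 'g set" where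
  "units gm gi = range (grd_r gm gi)"

definition groupoid :: "('g \<times> 'g) set \<Rightarrow> ('g \<Rightarrow> 'g \<Rightarrow> 'g) \<Rightarrow> ('g \<Rightarrow> 'g) \<Rightarrow> bool" where
  "groupoid G2 gm gi \<longleftrightarrow>
     (\<forall>x. gi (gi x) = x) \<and>
     (\<forall>x y z. (x, y) \<in> G2 \<and> (y, z) \<in> G2 \<longrightarrow>
        (gm x y, z) \<in> G2 \<and> (x, gm y z) \<in> G2 \<and> gm (gm x y) z = gm x (gm y z)) \<and>
     (\<forall>x. (gi x, x) \<in> G2) \<and> (\<forall>x y. (x, y) \<in> G2 \<longrightarrow> gm (gi x) (gm x y) = y) \<and>
     (\<forall>x. (x, gi x) \<in> G2) \<and> (\<forall>x z. (z, x) \<in> G2 \<longrightarrow> gm (gm z x) (gi x) = z)"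

definition etale_groupoid ::
  "('g::topological_space \<times> 'g) set \<Rightarrow> ('g \<Rightarrow> 'g \<Rightarrow> 'g) \<Rightarrow> ('g \<Rightarrow> 'g) \<Rightarrow> bool" where
  "etale_groupoid G2 gm gi \<longleftrightarrow>
     groupoid G2 gm gi \<and>
     continuous_on G2 (\<lambda>p. gm (fst p) (snd p)) \<and>
     continuous_on UNIV gi \<and>
     (\<forall>x. \<exists>U. open U \<and> x \<in> U \<and> open (grd_r gm gi ` U) \<and> inj_on (grd_r gm gi) U \<and>
            continuous_on U (grd_r gm gi) \<and>
            continuous_on (grd_r gm gi ` U) (inv_into U (grd_r gm gi)))"

definition locally_compact_type :: "'g::topological_space itself \<Rightarrow> bool" where
  "locally_compact_type _ \<longleftrightarrow> (\<forall>x::'g. \<exists>U K. open U \<and> compact K \<and> x \<in> U \<and> U \<subseteq> K)"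

definition sigma_compact_type :: "'g::topological_space itself \<Rightarrow> bool" where
  "sigma_compact_type _ \<longleftrightarrow> (\<exists>K :: nat \<Rightarrow> 'g set. (\<forall>n. compact (K n)) \<and> (\<Union>n. K n) = UNIV)"

definition setprod :: "('g \<Rightarrow> 'g \<Rightarrow> 'g) \<Rightarrow> ('g \<Rightarrow> 'g) \<Rightarrow> 'g set \<Rightarrow> 'g set \<Rightarrow> 'g set" where
  "setprod gm gi A B =
     {gm x y | x y. x \<in> A \<and> y \<in> B \<and> grd_s gm gi x = grd_r gm gi y}"

definition bdry :: "('g \<Rightarrow> 'g \<Rightarrow> 'g) \<Rightarrow> ('g \<Rightarrow> 'g) \<Rightarrow> 'g set \<Rightarrow> 'g set \<Rightarrow> 'g set" where
  "bdry gm gi K F = (setprod gm gi K F - F) \<union>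
     {x \<in> F. \<exists>y \<in> K. grd_s gm gi y = grd_r gm gi x \<and> gm y x \<notin> F}"

definition folner :: "('g \<Rightarrow> 'g \<Rightarrow> 'g) \<Rightarrow> ('g \<Rightarrow> 'g) \<Rightarrow> 'g set \<Rightarrow> real \<Rightarrow> 'g set \<Rightarrow> bool" where
  "folner gm gi K \<epsilon> F \<longleftrightarrow> finite F \<and> F \<noteq> {} \<and>
     real (card (bdry gm gi K F)) \<le> \<epsilon> * real (card F)"

definition fiberwise_amenable :: "('g::topological_space \<Rightarrow> 'g \<Rightarrow> 'g) \<Rightarrow> ('g \<Rightarrow> 'g) \<Rightarrow> bool" where
  "fiberwise_amenable gm gi \<longleftrightarrow>
     (\<forall>K \<epsilon>. compact K \<and> \<epsilon> > 0 \<longrightarrow> (\<exists>F. folner gm gi K \<epsilon> F))"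

definition ubiq_fiberwise_amenable :: "('g::topological_space \<Rightarrow> 'g \<Rightarrow> 'g) \<Rightarrow> ('g \<Rightarrow> 'g) \<Rightarrow> bool" where
  "ubiq_fiberwise_amenable gm gi \<longleftrightarrow>
     (\<forall>K \<epsilon>. compact K \<and> \<epsilon> > 0 \<longrightarrow>
        (\<exists>L. compact L \<and> (\<forall>u \<in> units gm gi.
           \<exists>F. F \<subseteq> {x \<in> L. grd_s gm gi x = u} \<union> {u} \<and> folner gm gi K \<epsilon> F)))"

definition minimal_groupoid :: "('g::topological_space \<Rightarrow> 'g \<Rightarrow> 'g) \<Rightarrow> ('g \<Rightarrow> 'g) \<Rightarrow> bool" where
  "minimal_groupoid gm gi \<longleftrightarrow>
     (\<forall>D. closedin (top_of_set (units gm gi)) D \<and>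
          grd_r gm gi ` {x. grd_s gm gi x \<in> D} = D \<longrightarrow> D = {} \<or> D = units gm gi)"

end

theory Submission
  imports Defs
begin


locale gpd =
  fixes G2 :: "('g \<times> 'g) set" and gm :: "'g \<Rightarrow> 'g \<Rightarrow> 'g" and gi :: "'g \<Rightarrow> 'g"
  assumes grp: "groupoid G2 gm gi"
begin

abbreviation r where "r \<equiv> grd_r gm gi"
abbreviation s where "s \<equiv> grd_s gm gi"

lemma ii[simp]: "gi (gi x) = x" using grp unfolding groupoid_def by blast
lemma assoc: "(x, y) \<in> G2 \<Longrightarrow> (y, z) \<in> G2 \<Longrightarrow>
        (gm x y, z) \<in> G2 \<and> (x, gm y z) \<in> G2 \<and> gm (gm x y) z = gm x (gm y z)"
  using grp unfolding groupoid_def by blast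
lemma c1[simp]: "(gi x, x) \<in> G2" using grp unfolding groupoid_def by blast
lemma c2[simp]: "(x, gi x) \<in> G2" using grp unfolding groupoid_def by blast
lemma canL: "(x, y) \<in> G2 \<Longrightarrow> gm (gi x) (gm x y) = y" using grp unfolding groupoid_def by blast
lemma canR: "(z, x) \<in> G2 \<Longrightarrow> gm (gm z x) (gi x) = z" using grp unfolding groupoid_def by blast

lemma s_r_inv: "s x = r (gi x)" by (simp add: grd_s_def grd_r_def)
lemma r_s_inv: "r x = s (gi x)" by (simp add: grd_s_def grd_r_def)

lemma rx_x: "gm (r x) x = x"
  using canR[of x "gi x"] by (simp add: grd_r_def)
lemma rx_x_G2: "(r x, x) \<in> G2"
  using assoc[of x "gi x" x] by (simp add: grd_r_def)
lemma x_sx_G2: "(x, s x) \<in> G2"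
  using assoc[of x "gi x" x] by (simp add: grd_s_def)
lemma x_sx: "gm x (s x) = x"
  using assoc[of x "gi x" x] rx_x by (simp add: grd_s_def grd_r_def)

lemma G2_iff: "(x, y) \<in> G2 \<longleftrightarrow> s x = r y"
proof
  assume h: "(x, y) \<in> G2"
  have a: "(gm (gi x) x, y) \<in> G2 \<and> gm (gm (gi x) x) y = y"
    using assoc[OF c1[of x] h] canL[OF h] by simp
  hence "gm (gm (gm (gi x) x) y) (gi y) = gm (gi x) x" using canR by blast
  thus "s x = r y" using a by (simp add: grd_s_def grd_r_def)
next
  assume h: "s x = r y"
  have "(x, r y) \<in> G2" using x_sx_G2[of x] h by simp
  from assoc[OF this rx_x_G2] show "(x, y) \<in> G2" using rx_x by simp
qed

lemma s_mult: "s x = r y \<Longrightarrow> s (gm x y) = s y"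
proof -
  assume h: "s x = r y"
  hence "(x,y) \<in> G2" by (simp add: G2_iff)
  from assoc[OF this c2[of y]] have "(gm x y, gi y) \<in> G2" by simp
  thus ?thesis by (simp add: G2_iff r_s_inv)
qed

lemma r_mult: "s x = r y \<Longrightarrow> r (gm x y) = r x"
proof -
  assume h: "s x = r y"
  hence "(x,y) \<in> G2" by (simp add: G2_iff)
  from assoc[OF c1[of x] this] have "(gi x, gm x y) \<in> G2" by simp
  thus ?thesis by (simp add: G2_iff s_r_inv)
qed

lemma assoc': "s x = r y \<Longrightarrow> s y = r z \<Longrightarrow> gm (gm x y) z = gm x (gm y z)"
  using assoc by (simp add: G2_iff)

lemma cancel_right: "s y = r x \<Longrightarrow> s z = r x \<Longrightarrow> gm y x = gm z x \<Longrightarrow> y = z"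
  by (metis G2_iff canR)
lemma cancel_left: "s x = r y \<Longrightarrow> s x = r z \<Longrightarrow> gm x y = gm x z \<Longrightarrow> y = z"
  by (metis G2_iff canL)

lemma unit_iff: "u \<in> units gm gi \<longleftrightarrow> r u = u"
proof
  assume "u \<in> units gm gi"
  then obtain x where u: "u = r x" by (auto simp: units_def)
  have e: "r x = gm x (gi x)" by (simp add: grd_r_def)
  have "r (gm x (gi x)) = r x" by (rule r_mult) (rule s_r_inv)
  hence "r (r x) = r x" using e by simp
  thus "r u = u" using u by simp
next
  assume "r u = u" thus "u \<in> units gm gi" unfolding units_def by (metis rangeI)
qed

lemma unit_s: "r u = u \<Longrightarrow> s u = u"
  by (metis grd_r_def r_s_inv s_mult s_r_inv)

lemma r_unit: "r (r x) = r x" using unit_iff[of "r x"] by (simp add: units_def)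
lemma s_unit: "r (s x) = s x" using r_unit[of "gi x"] by (simp add: r_s_inv[symmetric] s_r_inv)

lemma bdry_sub: "bdry gm gi K F \<subseteq> {z. s z \<in> s ` F}"
  unfolding bdry_def setprod_def by (auto simp: s_mult)

lemma bdry_fib: "bdry gm gi K F \<inter> {x. s x = v} = bdry gm gi K (F \<inter> {x. s x = v})"
  unfolding bdry_def setprod_def by (auto simp: s_mult)

lemma inj_transl: "inj_on (\<lambda>x. gm x g) {x. s x = r g}"
  by (rule inj_onI) (auto intro: cancel_right)

lemma bdry_transl:
  assumes F: "F \<subseteq> {x. s x = r g}"
  shows "bdry gm gi K ((\<lambda>x. gm x g) ` F) = (\<lambda>x. gm x g) ` bdry gm gi K F"
proof (rule set_eqI)
  fix z
  have memF: "gm x g \<in> (\<lambda>x. gm x g) ` F \<longleftrightarrow> x \<in> F" if "s x = r g" for x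
  proof
    assume "gm x g \<in> (\<lambda>x. gm x g) ` F"
    then obtain x' where "x' \<in> F" "gm x g = gm x' g" by auto
    with F that show "x \<in> F" using cancel_right[of x g x'] by auto
  qed auto
  show "z \<in> bdry gm gi K ((\<lambda>x. gm x g) ` F) \<longleftrightarrow> z \<in> (\<lambda>x. gm x g) ` bdry gm gi K F"
  proof
    assume "z \<in> bdry gm gi K ((\<lambda>x. gm x g) ` F)"
    then consider (a) y x where "y \<in> K" "x \<in> F" "s y = r (gm x g)" "z = gm y (gm x g)"
        "z \<notin> (\<lambda>x. gm x g) ` F"
      | (b) x y where "x \<in> F" "z = gm x g" "y \<in> K" "s y = r (gm x g)" "gm y (gm x g) \<notin> (\<lambda>x. gm x g) ` F"
      unfolding bdry_def setprod_def by blast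
    then show "z \<in> (\<lambda>x. gm x g) ` bdry gm gi K F"
    proof cases
      case a
      have sx: "s x = r g" using a F by auto
      have ry: "s y = r x" using a sx by (simp add: r_mult)
      have z: "z = gm (gm y x) g" using a sx ry by (simp add: assoc')
      have syx: "s (gm y x) = r g" using ry sx by (simp add: s_mult)
      have "gm y x \<notin> F" using a z memF[OF syx] by simp
      hence "gm y x \<in> bdry gm gi K F" unfolding bdry_def setprod_def using a ry by blast
      thus ?thesis using z by blast
    next
      case b
      have sx: "s x = r g" using b F by auto
      have ry: "s y = r x" using b sx by (simp add: r_mult)
      have syx: "s (gm y x) = r g" using ry sx by (simp add: s_mult)
      have "gm y (gm x g) = gm (gm y x) g" using ry sx by (simp add: assoc')
      hence "gm y x \<notin> F" using b memF[OF syx] by simp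
      hence "x \<in> bdry gm gi K F" unfolding bdry_def using b ry by blast
      thus ?thesis using b by blast
    qed
  next
    assume "z \<in> (\<lambda>x. gm x g) ` bdry gm gi K F"
    then obtain w where w: "w \<in> bdry gm gi K F" "z = gm w g" by auto
    then consider (a) y x where "y \<in> K" "x \<in> F" "s y = r x" "w = gm y x" "w \<notin> F"
      | (b) y where "w \<in> F" "y \<in> K" "s y = r w" "gm y w \<notin> F"
      unfolding bdry_def setprod_def by blast
    then show "z \<in> bdry gm gi K ((\<lambda>x. gm x g) ` F)"
    proof cases
      case a
      have sx: "s x = r g" using a F by auto
      have syx: "s (gm y x) = r g" using a sx by (simp add: s_mult)
      have z: "z = gm y (gm x g)" using a sx w by (simp add: assoc')
      have "z \<notin> (\<lambda>x. gm x g) ` F" using memF[OF syx] a w by simp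
      moreover have "s y = r (gm x g)" using a sx by (simp add: r_mult)
      ultimately show ?thesis unfolding bdry_def setprod_def using a z by blast
    next
      case b
      have sx: "s w = r g" using b F by auto
      have syx: "s (gm y w) = r g" using b sx by (simp add: s_mult)
      have "gm y (gm w g) = gm (gm y w) g" using b sx by (simp add: assoc')
      hence "gm y (gm w g) \<notin> (\<lambda>x. gm x g) ` F" using memF[OF syx] b by simp
      moreover have "s y = r (gm w g)" using b sx by (simp add: r_mult)
      moreover have "gm w g \<in> (\<lambda>x. gm x g) ` F" using b by blast
      ultimately show ?thesis unfolding bdry_def w(2) using b by blast
    qed
  qed
qed

lemma folner_transl:
  assumes F: "F \<subseteq> {x. s x = r g}" and fo: "folner gm gi K e F"
  shows "folner gm gi K e ((\<lambda>x. gm x g) ` F)"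
proof -
  have bs: "bdry gm gi K F \<subseteq> {x. s x = r g}"
  proof
    fix x assume "x \<in> bdry gm gi K F"
    then obtain f where "f \<in> F" "s x = s f" using bdry_sub[of K F] by auto
    thus "x \<in> {x. s x = r g}" using F by auto
  qed
  have "card ((\<lambda>x. gm x g) ` F) = card F"
    by (rule card_image, rule inj_on_subset[OF inj_transl F])
  moreover have "card (bdry gm gi K ((\<lambda>x. gm x g) ` F)) = card (bdry gm gi K F)"
    unfolding bdry_transl[OF F] by (rule card_image, rule inj_on_subset[OF inj_transl bs])
  ultimately show ?thesis using fo unfolding folner_def by auto
qed

lemma folner_fiber:
  assumes fo: "folner gm gi K e F" and e: "e \<ge> 0"
  shows "\<exists>v. folner gm gi K e (F \<inter> {x. s x = v})"
proof (rule ccontr)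
  assume H: "\<not> ?thesis"
  define V where "V = s ` F"
  have fin: "finite F" "F \<noteq> {}" using fo by (auto simp: folner_def)
  hence finV: "finite V" "V \<noteq> {}" by (auto simp: V_def)
  define Fv where "Fv v = F \<inter> {x. s x = v}" for v
  define Bv where "Bv v = bdry gm gi K F \<inter> {x. s x = v}" for v
  have Bv: "Bv v = bdry gm gi K (Fv v)" for v using bdry_fib by (simp add: Bv_def Fv_def)
  have ne: "Fv v \<noteq> {}" if "v \<in> V" for v using that by (auto simp: V_def Fv_def)
  have bad: "real (card (Bv v)) > e * real (card (Fv v))" if "v \<in> V" for v
    using H ne[OF that] fin unfolding folner_def Bv by (auto simp: Fv_def not_le)
  have Fu: "F = (\<Union>v\<in>V. Fv v)" by (auto simp: V_def Fv_def)
  have Bu: "bdry gm gi K F = (\<Union>v\<in>V. Bv v)" using bdry_sub[of K F] by (auto simp: V_def Bv_def)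
  show False
  proof (cases "\<forall>v\<in>V. finite (Bv v)")
    case True
    have "card F = (\<Sum>v\<in>V. card (Fv v))" unfolding Fu
      by (rule card_UN_disjoint) (use finV fin in \<open>auto simp: Fv_def\<close>)
    moreover have "card (bdry gm gi K F) = (\<Sum>v\<in>V. card (Bv v))" unfolding Bu
      by (rule card_UN_disjoint) (use finV True in \<open>auto simp: Bv_def\<close>)
    moreover have "(\<Sum>v\<in>V. e * real (card (Fv v))) < (\<Sum>v\<in>V. real (card (Bv v)))"
      by (rule sum_strict_mono) (use finV bad in auto)
    ultimately have "e * real (card F) < real (card (bdry gm gi K F))"
      by (simp add: sum_distrib_left)
    thus False using fo by (auto simp: folner_def)
  next
    case False
    then obtain v where v: "v \<in> V" "infinite (Bv v)" by auto
    have "folner gm gi K e (Fv v)" using v ne[OF v(1)] fin bad[OF v(1)] e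
      unfolding folner_def Bv by (auto simp: Fv_def)
    thus False using H by (auto simp: Fv_def)
  qed
qed

end


lemma open_gi_image:
  assumes "continuous_on UNIV gi" "\<And>x. gi (gi x) = x" "open U"
  shows "open (gi ` U)"
proof -
  have "gi ` U = gi -` U"
  proof
    show "gi ` U \<subseteq> gi -` U" using assms(2) by auto
    show "gi -` U \<subseteq> gi ` U"
    proof
      fix x assume "x \<in> gi -` U"
      hence "gi x \<in> U" "x = gi (gi x)" using assms(2) by auto
      thus "x \<in> gi ` U" by blast
    qed
  qed
  thus ?thesis using assms(1,3) by (metis open_vimage)
qed

lemma t2_hausdorff_euclidean: "Hausdorff_space (euclidean :: 'a::t2_space topology)"
  unfolding Hausdorff_space_def using hausdorff by (auto simp: disjnt_def)

lemma cpt_nbhd_inside: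
  fixes x :: "'a::t2_space"
  assumes lc: "\<forall>x::'a. \<exists>U K. open U \<and> compact K \<and> x \<in> U \<and> U \<subseteq> K"
    and W: "open W" "x \<in> W"
  shows "\<exists>Q C. open Q \<and> compact C \<and> x \<in> Q \<and> Q \<subseteq> C \<and> C \<subseteq> W"
proof -
  obtain U K where UK: "open U" "compact K" "x \<in> U" "U \<subseteq> K" using lc by blast
  have cK: "compact (K - W)" unfolding Diff_eq using UK(2) W(1) by (intro compact_Int_closed) auto
  have "compactin euclidean {x}" by simp
  moreover have "compactin euclidean (K - W)" using cK by simp
  moreover have "disjnt {x} (K - W)" using W by (auto simp: disjnt_def)
  ultimately obtain A B where AB: "open A" "open B" "{x} \<subseteq> A" "K - W \<subseteq> B" "disjnt A B"
    using Hausdorff_space_compact_separation[OF t2_hausdorff_euclidean] by (metis open_openin)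
  show ?thesis
  proof (intro exI conjI)
    show "open (U \<inter> A \<inter> W)" using UK AB W by auto
    show "compact (K - B)" unfolding Diff_eq using UK(2) AB(2) by (intro compact_Int_closed) auto
    show "x \<in> U \<inter> A \<inter> W" using UK AB W by auto
    show "U \<inter> A \<inter> W \<subseteq> K - B" using UK AB by (auto simp: disjnt_def)
    show "K - B \<subseteq> W" using AB by auto
  qed
qed

locale egpd = gpd G2 gm gi for G2 :: "('g::t2_space \<times> 'g) set" and gm gi +
  assumes etale: "etale_groupoid G2 gm gi"
    and lc: "locally_compact_type TYPE('g)"
begin

lemma lc': "\<forall>x::'g. \<exists>U K. open U \<and> compact K \<and> x \<in> U \<and> U \<subseteq> K"
  using lc unfolding locally_compact_type_def by blast

lemma cont_gm: "continuous_on G2 (\<lambda>p. gm (fst p) (snd p))"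
  using etale unfolding etale_groupoid_def by blast
lemma cont_gi: "continuous_on UNIV gi"
  using etale unfolding etale_groupoid_def by blast

lemma cont_r: "continuous_on UNIV r"
proof -
  have "continuous_on UNIV (\<lambda>x. (\<lambda>p. gm (fst p) (snd p)) ((\<lambda>x. (x, gi x)) x))"
    by (rule continuous_on_compose2[OF cont_gm]) (auto intro!: continuous_intros cont_gi)
  thus ?thesis by (simp add: grd_r_def[abs_def])
qed

lemma cont_s: "continuous_on UNIV s"
proof -
  have "continuous_on UNIV (\<lambda>x. (\<lambda>p. gm (fst p) (snd p)) ((\<lambda>x. (gi x, x)) x))"
    by (rule continuous_on_compose2[OF cont_gm]) (auto intro!: continuous_intros cont_gi)
  thus ?thesis by (simp add: grd_s_def[abs_def])
qed

lemma tendsto_gm: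
  assumes "(a \<longlongrightarrow> a0) F" "(b \<longlongrightarrow> b0) F" "s a0 = r b0" "\<forall>\<^sub>F w in F. s (a w) = r (b w)"
  shows "((\<lambda>w. gm (a w) (b w)) \<longlongrightarrow> gm a0 b0) F"
proof -
  have "((\<lambda>w. (\<lambda>p. gm (fst p) (snd p)) ((\<lambda>w. (a w, b w)) w)) \<longlongrightarrow> (\<lambda>p. gm (fst p) (snd p)) (a0, b0)) F"
    by (rule continuous_on_tendsto_compose[OF cont_gm])
       (use assms in \<open>auto intro!: tendsto_Pair simp: G2_iff\<close>)
  thus ?thesis by simp
qed

definition "lsec U \<sigma> \<longleftrightarrow> open U \<and> open (s ` U) \<and> continuous_on (s ` U) \<sigma> \<and>
   (\<forall>w\<in>s ` U. \<sigma> w \<in> U \<and> s (\<sigma> w) = w) \<and> (\<forall>y\<in>U. \<sigma> (s y) = y)"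

lemma local_section: "\<exists>U \<sigma>. x \<in> U \<and> lsec U \<sigma> \<and> inj_on r U"
proof -
  obtain U0 where U0: "open U0" "gi x \<in> U0" "open (r ` U0)" "inj_on r U0"
      "continuous_on (r ` U0) (inv_into U0 r)"
    using etale unfolding etale_groupoid_def by blast
  obtain U2 where U2: "open U2" "x \<in> U2" "inj_on r U2"
    using etale unfolding etale_groupoid_def by blast
  define U1 where "U1 = gi ` U0"
  define \<sigma> where "\<sigma> w = gi (inv_into U0 r w)" for w
  have oU1: "open U1" unfolding U1_def using open_gi_image[OF cont_gi ii U0(1)] .
  have sU1: "s ` U1 = r ` U0" unfolding U1_def image_image s_r_inv by simp
  have cs: "continuous_on (s ` U1) \<sigma>" unfolding sU1 \<sigma>_def
    by (rule continuous_on_compose2[OF cont_gi U0(5)]) auto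
  have sec1: "\<sigma> w \<in> U1 \<and> s (\<sigma> w) = w" if "w \<in> s ` U1" for w
  proof -
    have w: "w \<in> r ` U0" using that sU1 by simp
    have "inv_into U0 r w \<in> U0" "r (inv_into U0 r w) = w" using w by (auto intro: inv_into_into f_inv_into_f)
    thus ?thesis by (auto simp: \<sigma>_def U1_def s_r_inv)
  qed
  have sec2: "\<sigma> (s y) = y" if y: "y \<in> U1" for y
  proof -
    obtain z where z: "z \<in> U0" "y = gi z" using y unfolding U1_def by auto
    thus ?thesis by (simp add: \<sigma>_def s_r_inv inv_into_f_f[OF U0(4)])
  qed
  define U where "U = U1 \<inter> U2"
  have sU: "s ` U = s ` U1 \<inter> \<sigma> -` U2"
  proof
    show "s ` U \<subseteq> s ` U1 \<inter> \<sigma> -` U2" using sec2 U_def by auto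
    show "s ` U1 \<inter> \<sigma> -` U2 \<subseteq> s ` U"
    proof
      fix w assume "w \<in> s ` U1 \<inter> \<sigma> -` U2"
      hence "\<sigma> w \<in> U" "s (\<sigma> w) = w" using sec1 by (auto simp: U_def)
      thus "w \<in> s ` U" by (metis image_eqI)
    qed
  qed
  have "lsec U \<sigma>" unfolding lsec_def
  proof (intro conjI ballI)
    show "open U" using oU1 U2 by (simp add: U_def open_Int)
    show "open (s ` U)" unfolding sU
      by (rule continuous_open_preimage[OF cs _ U2(1)]) (simp add: sU1 U0(3))
    show "continuous_on (s ` U) \<sigma>" using cs by (rule continuous_on_subset) (auto simp: U_def)
    fix w assume "w \<in> s ` U"
    thus "\<sigma> w \<in> U" "s (\<sigma> w) = w" using sU sec1 by (auto simp: U_def)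
  next
    fix y assume "y \<in> U" thus "\<sigma> (s y) = y" using sec2 by (auto simp: U_def)
  qed
  moreover have "x \<in> U" using U0(2) U2(2) by (auto simp: U_def U1_def image_iff intro: bexI[of _ "gi x"])
  moreover have "inj_on r U" using U2(3) by (rule inj_on_subset) (auto simp: U_def)
  ultimately show ?thesis by blast
qed

lemma lsec_inj: "lsec U \<sigma> \<Longrightarrow> inj_on s U"
  by (rule inj_on_inverseI[where g=\<sigma>]) (auto simp: lsec_def)

lemma secD:
  assumes "lsec U \<sigma>"
  shows "open U" "open (s ` U)" "continuous_on (s ` U) \<sigma>"
    "\<And>w. w \<in> s ` U \<Longrightarrow> \<sigma> w \<in> U" "\<And>w. w \<in> s ` U \<Longrightarrow> s (\<sigma> w) = w"
    "\<And>y. y \<in> U \<Longrightarrow> \<sigma> (s y) = y"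
  using assms unfolding lsec_def by blast+

lemma open_s_image: assumes "open W" shows "open (s ` W)"
proof (subst open_subopen, intro ballI)
  fix w assume "w \<in> s ` W"
  then obtain x where x: "x \<in> W" "w = s x" by auto
  obtain U \<sigma> where U: "x \<in> U" "lsec U \<sigma>" using local_section by blast
  note S = secD[OF U(2)]
  have o: "open (s ` U \<inter> \<sigma> -` W)"
    by (rule continuous_open_preimage[OF S(3) S(2) assms])
  show "\<exists>T. open T \<and> w \<in> T \<and> T \<subseteq> s ` W"
  proof (intro exI conjI)
    show "open (s ` U \<inter> \<sigma> -` W)" by (rule o)
    have "\<sigma> w = x" using S(6)[OF U(1)] x by simp
    thus "w \<in> s ` U \<inter> \<sigma> -` W" using U x by auto
    show "s ` U \<inter> \<sigma> -` W \<subseteq> s ` W"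
    proof
      fix w' assume w': "w' \<in> s ` U \<inter> \<sigma> -` W"
      hence "s (\<sigma> w') = w'" "\<sigma> w' \<in> W" using S(5) by auto
      thus "w' \<in> s ` W" by (metis image_eqI)
    qed
  qed
qed

end


context egpd begin

lemma tend_id_nhds: "((\<lambda>w. w) \<longlongrightarrow> v) (nhds v)"
  by (simp add: filterlim_ident)

lemma stab_main:
  fixes P :: "'p set" and B :: "'p \<Rightarrow> 'g set" and \<sigma>b :: "'p \<Rightarrow> 'g \<Rightarrow> 'g" and Kj :: "'p \<Rightarrow> 'g set"
  assumes finP: "finite P"
    and Bsec: "\<And>p. p \<in> P \<Longrightarrow> lsec (B p) (\<sigma>b p) \<and> inj_on r (B p)"
    and KjB: "\<And>p. p \<in> P \<Longrightarrow> Kj p \<subseteq> B p \<and> Kj p \<subseteq> K \<and> closed (s ` Kj p)"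
    and Kcov: "K \<subseteq> (\<Union>p\<in>P. Kj p)"
    and Fv: "F \<subseteq> {x. s x = v}" and fo: "folner gm gi K \<delta> F"
  shows "\<exists>L0. compact L0 \<and> (\<forall>\<^sub>F w in nhds v. \<exists>F'. F' \<subseteq> L0 \<inter> {x. s x = w} \<and>
            folner gm gi K ((real (card P) + 1) * \<delta>) F')"
proof -
  have finF: "finite F" and neF: "F \<noteq> {}" using fo by (auto simp: folner_def)
  define U where "U f = (SOME U. \<exists>\<phi>. f \<in> U \<and> lsec U \<phi>)" for f
  define \<phi> where "\<phi> f = (SOME \<phi>. f \<in> U f \<and> lsec (U f) \<phi>)" for f
  have U: "f \<in> U f \<and> lsec (U f) (\<phi> f)" for f
  proof -
    have "\<exists>\<phi>. f \<in> U f \<and> lsec (U f) \<phi>" unfolding U_def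
      by (rule someI_ex) (use local_section in blast)
    thus ?thesis unfolding \<phi>_def by (rule someI_ex)
  qed
  define Of :: "'g \<Rightarrow> 'g set" where "Of f = (SOME Q. \<exists>C. open Q \<and> compact C \<and> f \<in> Q \<and> Q \<subseteq> C)" for f
  define Cf :: "'g \<Rightarrow> 'g set" where "Cf f = (SOME C. open (Of f) \<and> compact C \<and> f \<in> Of f \<and> Of f \<subseteq> C)" for f
  have OC: "open (Of f) \<and> compact (Cf f) \<and> f \<in> Of f \<and> Of f \<subseteq> Cf f" for f
  proof -
    have "\<exists>C. open (Of f) \<and> compact C \<and> f \<in> Of f \<and> Of f \<subseteq> C" unfolding Of_def
    proof (rule someI_ex)
      obtain Q C where "open Q" "compact C" "f \<in> Q" "Q \<subseteq> C" using lc' by blast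
      thus "\<exists>Q C. open Q \<and> compact C \<and> f \<in> Q \<and> Q \<subseteq> C" by blast
    qed
    thus ?thesis unfolding Cf_def by (rule someI_ex)
  qed
  define L0 where "L0 = (\<Union>f\<in>F. Cf f)"
  have cL0: "compact L0" unfolding L0_def using finF OC by (intro compact_UN) auto
  have sF: "s f = v" if "f \<in> F" for f using that Fv by auto
  have phiv: "\<phi> f v = f" if "f \<in> F" for f
    using secD(6)[of "U f" "\<phi> f" f] U[of f] sF[OF that] by simp
  have vin: "v \<in> s ` U f" if "f \<in> F" for f using U[of f] sF[OF that] by (metis image_eqI)
  have ev_in: "\<forall>\<^sub>F w in nhds v. w \<in> s ` U f" if "f \<in> F" for f
    by (rule eventually_nhds_in_open) (use secD(2)[of "U f" "\<phi> f"] U[of f] vin[OF that] in auto)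
  have tphi: "((\<lambda>w. \<phi> f w) \<longlongrightarrow> f) (nhds v)" if "f \<in> F" for f
  proof -
    have "((\<lambda>w. \<phi> f w) \<longlongrightarrow> \<phi> f v) (nhds v)"
      by (rule continuous_on_tendsto_compose[OF secD(3)[of "U f" "\<phi> f"] tend_id_nhds])
         (use U[of f] vin[OF that] ev_in[OF that] in auto)
    thus ?thesis using phiv[OF that] by simp
  qed
  have tr: "((\<lambda>w. r (\<phi> f w)) \<longlongrightarrow> r f) (nhds v)" if "f \<in> F" for f
    by (rule continuous_on_tendsto_compose[OF cont_r tphi[OF that]]) auto
  define yv where "yv f p = \<sigma>b p (r f)" for f p
  define y where "y f p w = \<sigma>b p (r (\<phi> f w))" for f p w
  have yvv: "y f p v = yv f p" if "f \<in> F" for f p using phiv[OF that] by (simp add: y_def yv_def)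
  define good where "good f p \<longleftrightarrow> r f \<in> s ` Kj p \<and> gm (yv f p) f \<in> F" for f p
  define Bad where "Bad = {(f, p). f \<in> F \<and> p \<in> P \<and> r f \<in> s ` Kj p \<and> gm (yv f p) f \<notin> F}"
  have yK: "\<sigma>b p (s k) = k" if "p \<in> P" "k \<in> Kj p" for p k
    using secD(6)[of "B p" "\<sigma>b p" k] Bsec[OF that(1)] KjB[OF that(1)] that(2) by auto
  have yvK: "yv f p \<in> Kj p \<and> s (yv f p) = r f" if p: "p \<in> P" and rk: "r f \<in> s ` Kj p" for f p
  proof -
    obtain k where k: "k \<in> Kj p" "s k = r f" using rk by auto
    thus ?thesis using yK[OF p k(1)] by (simp add: yv_def)
  qed
  have E1: "\<forall>\<^sub>F w in nhds v. \<forall>f\<in>F. w \<in> s ` U f \<and> s (\<phi> f w) = w \<and> \<phi> f w \<in> Of f"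
  proof (rule eventually_ball_finite[OF finF], intro ballI)
    fix f assume f: "f \<in> F"
    have "\<forall>\<^sub>F w in nhds v. \<phi> f w \<in> Of f"
      using topological_tendstoD[OF tphi[OF f]] OC[of f] by blast
    thus "\<forall>\<^sub>F w in nhds v. w \<in> s ` U f \<and> s (\<phi> f w) = w \<and> \<phi> f w \<in> Of f"
      using ev_in[OF f] by eventually_elim (use secD(5)[of "U f" "\<phi> f"] U[of f] in auto)
  qed
  have E2: "\<forall>\<^sub>F w in nhds v. \<forall>fp\<in>F \<times> P. r (fst fp) \<notin> s ` Kj (snd fp) \<longrightarrow>
              r (\<phi> (fst fp) w) \<notin> s ` Kj (snd fp)"
  proof (rule eventually_ball_finite, use finF finP in simp, intro ballI)
    fix fp assume fp: "fp \<in> F \<times> P"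
    show "\<forall>\<^sub>F w in nhds v. r (fst fp) \<notin> s ` Kj (snd fp) \<longrightarrow> r (\<phi> (fst fp) w) \<notin> s ` Kj (snd fp)"
    proof (cases "r (fst fp) \<in> s ` Kj (snd fp)")
      case True thus ?thesis by simp
    next
      case nin: False
      have "open (- (s ` Kj (snd fp)))" using KjB[of "snd fp"] fp by auto
      moreover have "fst fp \<in> F" using fp by auto
      ultimately have "\<forall>\<^sub>F w in nhds v. r (\<phi> (fst fp) w) \<in> - (s ` Kj (snd fp))"
        using topological_tendstoD[OF tr[of "fst fp"]] nin by blast
      thus ?thesis by (rule eventually_mono) auto
    qed
  qed
  have E3: "\<forall>\<^sub>F w in nhds v. \<forall>fp\<in>F \<times> P. good (fst fp) (snd fp) \<longrightarrow>
              gm (y (fst fp) (snd fp) w) (\<phi> (fst fp) w) \<in> (\<lambda>f. \<phi> f w) ` F"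
  proof (rule eventually_ball_finite, use finF finP in simp, intro ballI)
    fix fp assume fp: "fp \<in> F \<times> P"
    obtain f p where fpe: "fp = (f, p)" by (cases fp)
    have f: "f \<in> F" and p: "p \<in> P" using fp fpe by auto
    show "\<forall>\<^sub>F w in nhds v. good (fst fp) (snd fp) \<longrightarrow>
              gm (y (fst fp) (snd fp) w) (\<phi> (fst fp) w) \<in> (\<lambda>f. \<phi> f w) ` F"
    proof (cases "good f p")
      case False thus ?thesis by (simp add: fpe)
    next
      case True
      define g where "g = gm (yv f p) f"
      have g: "g \<in> F" using True by (simp add: good_def g_def)
      have rfK: "r f \<in> s ` Kj p" using True by (simp add: good_def)
      have rfB: "r f \<in> s ` B p" using rfK KjB[OF p] by auto
      have evB: "\<forall>\<^sub>F w in nhds v. r (\<phi> f w) \<in> s ` B p"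
        using topological_tendstoD[OF tr[OF f], of "s ` B p"] secD(2)[of "B p" "\<sigma>b p"] Bsec[OF p] rfB by auto
      have ty: "((\<lambda>w. y f p w) \<longlongrightarrow> yv f p) (nhds v)"
        unfolding y_def yv_def
        by (rule continuous_on_tendsto_compose[OF secD(3)[of "B p" "\<sigma>b p"] tr[OF f]])
           (use Bsec[OF p] rfB evB in auto)
      have evs: "\<forall>\<^sub>F w in nhds v. s (y f p w) = r (\<phi> f w)"
        using evB by eventually_elim (use secD(5)[of "B p" "\<sigma>b p"] Bsec[OF p] in \<open>auto simp: y_def\<close>)
      have tz: "((\<lambda>w. gm (y f p w) (\<phi> f w)) \<longlongrightarrow> g) (nhds v)"
        unfolding g_def by (rule tendsto_gm[OF ty tphi[OF f] _ evs]) (use yvK[OF p rfK] in simp)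
      have evU: "\<forall>\<^sub>F w in nhds v. gm (y f p w) (\<phi> f w) \<in> U g"
        using topological_tendstoD[OF tz] secD(1)[of "U g" "\<phi> g"] U[of g] by blast
      have "\<forall>\<^sub>F w in nhds v. gm (y f p w) (\<phi> f w) \<in> (\<lambda>f. \<phi> f w) ` F"
        using evU evs E1
      proof eventually_elim
        case (elim w)
        have sz: "s (gm (y f p w) (\<phi> f w)) = w" using elim f by (simp add: s_mult)
        have "\<phi> g (s (gm (y f p w) (\<phi> f w))) = gm (y f p w) (\<phi> f w)"
          using secD(6)[of "U g" "\<phi> g"] U[of g] elim(1) by blast
        hence "gm (y f p w) (\<phi> f w) = \<phi> g w" using sz by simp
        thus ?case using g by blast
      qed
      thus ?thesis by (simp add: fpe)
    qed
  qed
  have E4: "\<forall>\<^sub>F w in nhds v. \<forall>fg\<in>F \<times> F. fst fg \<noteq> snd fg \<longrightarrow> \<phi> (fst fg) w \<noteq> \<phi> (snd fg) w"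
  proof (rule eventually_ball_finite, use finF in simp, intro ballI)
    fix fg assume fg: "fg \<in> F \<times> F"
    show "\<forall>\<^sub>F w in nhds v. fst fg \<noteq> snd fg \<longrightarrow> \<phi> (fst fg) w \<noteq> \<phi> (snd fg) w"
    proof (cases "fst fg = snd fg")
    case True thus ?thesis by simp
    next
    case ne: False
    obtain A1 A2 where A: "open A1" "open A2" "fst fg \<in> A1" "snd fg \<in> A2" "A1 \<inter> A2 = {}"
      using hausdorff[OF ne] by blast
    have "\<forall>\<^sub>F w in nhds v. \<phi> (fst fg) w \<in> A1" using topological_tendstoD[OF tphi, of "fst fg" A1] fg A by auto
    moreover have "\<forall>\<^sub>F w in nhds v. \<phi> (snd fg) w \<in> A2" using topological_tendstoD[OF tphi, of "snd fg" A2] fg A by auto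
    ultimately show "\<forall>\<^sub>F w in nhds v. fst fg \<noteq> snd fg \<longrightarrow> \<phi> (fst fg) w \<noteq> \<phi> (snd fg) w"
      by eventually_elim (use A in auto)
    qed
  qed
  show ?thesis
  proof (intro exI conjI)
    show "compact L0" by (rule cL0)
    show "\<forall>\<^sub>F w in nhds v. \<exists>F'. F' \<subseteq> L0 \<inter> {x. s x = w} \<and> folner gm gi K ((real (card P) + 1) * \<delta>) F'"
      using E1 E2 E3 E4
    proof eventually_elim
      case (elim w)
      define F' where "F' = (\<lambda>f. \<phi> f w) ` F"
      have injF: "inj_on (\<lambda>f. \<phi> f w) F"
      proof (rule inj_onI)
        fix f g assume "f \<in> F" "g \<in> F" "\<phi> f w = \<phi> g w"
        show "f = g"
        proof (rule ccontr)
          assume "f \<noteq> g"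
          hence "\<phi> f w \<noteq> \<phi> g w" using elim(4)[rule_format, of "(f, g)"] \<open>f \<in> F\<close> \<open>g \<in> F\<close> by simp
          thus False using \<open>\<phi> f w = \<phi> g w\<close> by simp
        qed
      qed
      have cardF': "card F' = card F" unfolding F'_def by (rule card_image[OF injF])
      have F'sub: "F' \<subseteq> L0 \<inter> {x. s x = w}" using elim(1) OC unfolding F'_def L0_def by blast
      have key: "\<exists>p\<in>P. (f, p) \<in> Bad \<and> k = y f p w"
        if f: "f \<in> F" and k: "k \<in> K" "s k = r (\<phi> f w)" "gm k (\<phi> f w) \<notin> F'" for f k
      proof -
        obtain p where p: "p \<in> P" "k \<in> Kj p" using Kcov k(1) by auto
        have "r (\<phi> f w) \<in> s ` Kj p" using p k by (metis image_eqI)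
        hence rf: "r f \<in> s ` Kj p" using elim(2)[rule_format, of "(f, p)"] f p by auto
        have ky: "y f p w = k" using yK[OF p] k(2) by (simp add: y_def)
        have "\<not> good f p"
        proof
          assume "good f p"
          hence "gm (y f p w) (\<phi> f w) \<in> F'" using elim(3)[rule_format, of "(f, p)"] f p unfolding F'_def by simp
          thus False using ky k(3) by simp
        qed
        hence "(f, p) \<in> Bad" using rf f p by (simp add: good_def Bad_def)
        thus ?thesis using p ky by auto
      qed
      define T1 where "T1 = (\<lambda>(f, p). gm (y f p w) (\<phi> f w)) ` Bad"
      define T2 where "T2 = (\<lambda>f. \<phi> f w) ` (fst ` Bad)"
      have finBad: "finite Bad"
        by (rule finite_subset[of _ "F \<times> P"]) (use finF finP in \<open>auto simp: Bad_def\<close>)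
      have sub: "bdry gm gi K F' \<subseteq> T1 \<union> T2"
      proof
        fix z assume "z \<in> bdry gm gi K F'"
        then consider (a) k x where "k \<in> K" "x \<in> F'" "s k = r x" "z = gm k x" "z \<notin> F'"
          | (b) k where "z \<in> F'" "k \<in> K" "s k = r z" "gm k z \<notin> F'"
          unfolding bdry_def setprod_def by blast
        thus "z \<in> T1 \<union> T2"
        proof cases
          case a
          then obtain f where f: "f \<in> F" "x = \<phi> f w" unfolding F'_def by auto
          obtain p where p: "p \<in> P" "(f, p) \<in> Bad" "k = y f p w" using key[OF f(1) a(1)] a f by auto
          have "z = (\<lambda>(f, p). gm (y f p w) (\<phi> f w)) (f, p)" using a f p by simp
          thus ?thesis using p unfolding T1_def by blast
        next
          case b
          then obtain f where f: "f \<in> F" "z = \<phi> f w" unfolding F'_def by auto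
          obtain p where p: "p \<in> P" "(f, p) \<in> Bad" using key[OF f(1) b(2)] b f by auto
          have "f \<in> fst ` Bad" using p by force
          thus ?thesis using f unfolding T2_def by blast
        qed
      qed
      define A where "A = setprod gm gi K F - F"
      define Bs where "Bs = {x \<in> F. \<exists>y\<in>K. s y = r x \<and> gm y x \<notin> F}"
      have bdF: "bdry gm gi K F = A \<union> Bs" unfolding bdry_def A_def Bs_def ..
      have finA: "finite A"
      proof (rule finite_subset)
        show "A \<subseteq> (\<lambda>(f, p). gm (yv f p) f) ` (F \<times> P)"
        proof
          fix z assume "z \<in> A"
          then obtain k f where kf: "k \<in> K" "f \<in> F" "s k = r f" "z = gm k f"
            unfolding A_def setprod_def by blast
          obtain p where p: "p \<in> P" "k \<in> Kj p" using Kcov kf(1) by auto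
          have "yv f p = k" using yK[OF p] kf(3) by (simp add: yv_def)
          hence "z = (\<lambda>(f, p). gm (yv f p) f) (f, p)" using kf by simp
          thus "z \<in> (\<lambda>(f, p). gm (yv f p) f) ` (F \<times> P)" using p kf by blast
        qed
        show "finite ((\<lambda>(f, p). gm (yv f p) f) ` (F \<times> P))" using finF finP by simp
      qed
      have finBs: "finite Bs" using finF unfolding Bs_def by simp
      have cbd: "card (bdry gm gi K F) = card A + card Bs"
        unfolding bdF by (rule card_Un_disjoint[OF finA finBs]) (auto simp: A_def Bs_def)
      have cBadp: "card {f \<in> F. (f, p) \<in> Bad} \<le> card A" if p: "p \<in> P" for p
      proof (rule card_inj_on_le[OF _ _ finA])
        show "inj_on (\<lambda>f. gm (yv f p) f) {f \<in> F. (f, p) \<in> Bad}"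
        proof (rule inj_onI)
          fix f f' assume f: "f \<in> {f \<in> F. (f, p) \<in> Bad}" and f': "f' \<in> {f \<in> F. (f, p) \<in> Bad}"
            and eq: "gm (yv f p) f = gm (yv f' p) f'"
          have h1: "yv f p \<in> Kj p" "s (yv f p) = r f" using yvK[OF p] f by (auto simp: Bad_def)
          have h2: "yv f' p \<in> Kj p" "s (yv f' p) = r f'" using yvK[OF p] f' by (auto simp: Bad_def)
          have "r (yv f p) = r (yv f' p)" using eq r_mult[OF h1(2)] r_mult[OF h2(2)] by simp
          moreover have "inj_on r (B p)" "yv f p \<in> B p" "yv f' p \<in> B p" using Bsec[OF p] KjB[OF p] h1(1) h2(1) by auto
          ultimately have "yv f p = yv f' p" by (simp add: inj_on_def)
          thus "f = f'" using cancel_left[of "yv f p" f f'] h1 h2 eq by simp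
        qed
        show "(\<lambda>f. gm (yv f p) f) ` {f \<in> F. (f, p) \<in> Bad} \<subseteq> A"
        proof
          fix z assume "z \<in> (\<lambda>f. gm (yv f p) f) ` {f \<in> F. (f, p) \<in> Bad}"
          then obtain f where f: "f \<in> F" "(f, p) \<in> Bad" "z = gm (yv f p) f" by auto
          have h: "yv f p \<in> Kj p" "s (yv f p) = r f" using yvK[OF p] f by (auto simp: Bad_def)
          have "yv f p \<in> K" using h(1) KjB[OF p] by auto
          hence "z \<in> setprod gm gi K F" unfolding setprod_def using f h by blast
          moreover have "z \<notin> F" using f by (simp add: Bad_def)
          ultimately show "z \<in> A" by (simp add: A_def)
        qed
      qed
      have cBad: "card Bad \<le> card P * card A"
      proof -
        have "Bad = (\<Union>p\<in>P. (\<lambda>f. (f, p)) ` {f \<in> F. (f, p) \<in> Bad})" by (auto simp: Bad_def)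
        hence "card Bad \<le> (\<Sum>p\<in>P. card ((\<lambda>f. (f, p)) ` {f \<in> F. (f, p) \<in> Bad}))"
          using card_UN_le[OF finP, of "\<lambda>p. (\<lambda>f. (f, p)) ` {f \<in> F. (f, p) \<in> Bad}"] by simp
        also have "\<dots> \<le> (\<Sum>p\<in>P. card A)"
        proof (rule sum_mono)
          fix p assume p: "p \<in> P"
          have "card ((\<lambda>f. (f, p)) ` {f \<in> F. (f, p) \<in> Bad}) \<le> card {f \<in> F. (f, p) \<in> Bad}"
            by (rule card_image_le) (use finF in simp)
          thus "card ((\<lambda>f. (f, p)) ` {f \<in> F. (f, p) \<in> Bad}) \<le> card A" using cBadp[OF p] by linarith
        qed
        finally show ?thesis by simp
      qed
      have cfst: "card (fst ` Bad) \<le> card Bs"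
      proof (rule card_mono[OF finBs])
        show "fst ` Bad \<subseteq> Bs"
        proof
          fix f assume "f \<in> fst ` Bad"
          then obtain p where fp: "(f, p) \<in> Bad" by force
          hence p: "p \<in> P" and f: "f \<in> F" and rk: "r f \<in> s ` Kj p" and nf: "gm (yv f p) f \<notin> F"
            by (auto simp: Bad_def)
          have h: "yv f p \<in> Kj p" "s (yv f p) = r f" using yvK[OF p rk] by auto
          have "yv f p \<in> K" using h(1) KjB[OF p] by auto
          thus "f \<in> Bs" unfolding Bs_def using f h nf by blast
        qed
      qed
      have c1: "card T1 \<le> card Bad" unfolding T1_def by (rule card_image_le[OF finBad])
      have c2: "card T2 \<le> card (fst ` Bad)" unfolding T2_def by (rule card_image_le) (use finBad in simp)
      have "card (bdry gm gi K F') \<le> card (T1 \<union> T2)"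
        by (rule card_mono[OF _ sub]) (use finBad in \<open>simp add: T1_def T2_def\<close>)
      also have "\<dots> \<le> card T1 + card T2" by (rule card_Un_le)
      finally have "card (bdry gm gi K F') \<le> card P * card A + card Bs" using c1 c2 cBad cfst by linarith
      also have "\<dots> \<le> (card P + 1) * (card A + card Bs)" by (simp add: algebra_simps)
      finally have nb: "card (bdry gm gi K F') \<le> (card P + 1) * card (bdry gm gi K F)" using cbd by simp
      have fo': "real (card (bdry gm gi K F)) \<le> \<delta> * real (card F)" using fo by (simp add: folner_def)
      have "real (card (bdry gm gi K F')) \<le> (real (card P) + 1) * real (card (bdry gm gi K F))"
      proof -
        have "real (card (bdry gm gi K F')) \<le> real ((card P + 1) * card (bdry gm gi K F))"
          using nb by (simp only: of_nat_le_iff)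
        thus ?thesis by (simp add: algebra_simps)
      qed
      also have "\<dots> \<le> (real (card P) + 1) * (\<delta> * real (card F))"
        by (rule mult_left_mono[OF fo']) simp
      finally have "real (card (bdry gm gi K F')) \<le> ((real (card P) + 1) * \<delta>) * real (card F')"
        using cardF' by (simp add: mult.assoc)
      moreover have "finite F'" "F' \<noteq> {}" using finF neF by (auto simp: F'_def)
      ultimately show ?case using F'sub unfolding folner_def by blast
    qed
  qed
qed

end


context egpd begin

lemma stab:
  assumes K: "compact K"
  shows "\<exists>M::real. M > 0 \<and> (\<forall>F v \<delta>. F \<subseteq> {x. s x = v} \<and> folner gm gi K \<delta> F \<longrightarrow>
     (\<exists>L0. compact L0 \<and> (\<forall>\<^sub>F w in nhds v. \<exists>F'. F' \<subseteq> L0 \<inter> {x. s x = w} \<and> folner gm gi K (M * \<delta>) F')))"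
proof -
  define B :: "'g \<Rightarrow> 'g set" where "B p = (SOME U. \<exists>\<sigma>. p \<in> U \<and> lsec U \<sigma> \<and> inj_on r U)" for p
  define \<sigma>b :: "'g \<Rightarrow> 'g \<Rightarrow> 'g" where "\<sigma>b p = (SOME \<sigma>. p \<in> B p \<and> lsec (B p) \<sigma> \<and> inj_on r (B p))" for p
  have Bp: "p \<in> B p \<and> lsec (B p) (\<sigma>b p) \<and> inj_on r (B p)" for p
  proof -
    have "\<exists>\<sigma>. p \<in> B p \<and> lsec (B p) \<sigma> \<and> inj_on r (B p)" unfolding B_def
      by (rule someI_ex) (use local_section in blast)
    thus ?thesis unfolding \<sigma>b_def by (rule someI_ex)
  qed
  define Q :: "'g \<Rightarrow> 'g set" where "Q p = (SOME Q. \<exists>C. open Q \<and> compact C \<and> p \<in> Q \<and> Q \<subseteq> C \<and> C \<subseteq> B p)" for p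
  define Cc :: "'g \<Rightarrow> 'g set" where "Cc p = (SOME C. open (Q p) \<and> compact C \<and> p \<in> Q p \<and> Q p \<subseteq> C \<and> C \<subseteq> B p)" for p
  have QC: "open (Q p) \<and> compact (Cc p) \<and> p \<in> Q p \<and> Q p \<subseteq> Cc p \<and> Cc p \<subseteq> B p" for p
  proof -
    have "\<exists>C. open (Q p) \<and> compact C \<and> p \<in> Q p \<and> Q p \<subseteq> C \<and> C \<subseteq> B p" unfolding Q_def
    proof (rule someI_ex)
      show "\<exists>Q C. open Q \<and> compact C \<and> p \<in> Q \<and> Q \<subseteq> C \<and> C \<subseteq> B p"
        by (rule cpt_nbhd_inside[OF lc']) (use secD(1)[of "B p" "\<sigma>b p"] Bp[of p] in auto)
    qed
    thus ?thesis unfolding Cc_def by (rule someI_ex)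
  qed
  obtain P where P: "P \<subseteq> K" "finite P" "K \<subseteq> (\<Union>p\<in>P. Q p)"
    using compactE_image[OF K, of K Q] QC by blast
  define Kj where "Kj p = K \<inter> Cc p" for p
  have cKj: "compact (Kj p)" for p
    unfolding Kj_def using K QC[of p] by (intro compact_Int_closed compact_imp_closed) auto
  have KjB: "Kj p \<subseteq> B p \<and> Kj p \<subseteq> K \<and> closed (s ` Kj p)" for p
  proof -
    have "compact (s ` Kj p)" by (rule compact_continuous_image[OF continuous_on_subset[OF cont_s] cKj]) simp
    thus ?thesis using QC[of p] by (auto simp: Kj_def intro: compact_imp_closed)
  qed
  have Kcov: "K \<subseteq> (\<Union>p\<in>P. Kj p)"
  proof
    fix x assume x: "x \<in> K"
    then obtain p where "p \<in> P" "x \<in> Q p" using P(3) by blast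
    hence "p \<in> P" "x \<in> Kj p" using QC[of p] x by (auto simp: Kj_def)
    thus "x \<in> (\<Union>p\<in>P. Kj p)" by blast
  qed
  show ?thesis
  proof (rule exI[of _ "real (card P) + 1"], rule conjI)
    show "(0::real) < real (card P) + 1" by simp
    show "\<forall>F v \<delta>. F \<subseteq> {x. s x = v} \<and> folner gm gi K \<delta> F \<longrightarrow>
     (\<exists>L0. compact L0 \<and> (\<forall>\<^sub>F w in nhds v. \<exists>F'. F' \<subseteq> L0 \<inter> {x. s x = w} \<and> folner gm gi K ((real (card P) + 1) * \<delta>) F'))"
    proof (intro allI impI)
    fix F v \<delta> assume h: "F \<subseteq> {x. s x = v} \<and> folner gm gi K \<delta> F"
    show "\<exists>L0. compact L0 \<and> (\<forall>\<^sub>F w in nhds v. \<exists>F'. F' \<subseteq> L0 \<inter> {x. s x = w} \<and>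
              folner gm gi K ((real (card P) + 1) * \<delta>) F')"
      by (rule stab_main[where F=F and v=v and \<delta>=\<delta> and P=P and B=B and \<sigma>b=\<sigma>b and Kj=Kj and K=K])
         (use P(2) Bp KjB Kcov h in auto)
    qed
  qed
qed

lemma unit_of_s: "s x \<in> units gm gi" using s_unit unit_iff by simp

end
context egpd begin

lemma fwa_imp_ubiq:
  assumes min: "minimal_groupoid gm gi" and fa: "fiberwise_amenable gm gi"
  shows "ubiq_fiberwise_amenable gm gi"
  unfolding ubiq_fiberwise_amenable_def
proof (intro allI impI)
  fix K :: "'g set" and \<epsilon> :: real assume Ke: "compact K \<and> \<epsilon> > 0"
  hence K: "compact K" and e: "\<epsilon> > 0" by auto
  obtain M where MM: "M > 0 \<and> (\<forall>F v \<delta>. F \<subseteq> {x. s x = v} \<and> folner gm gi K \<delta> F \<longrightarrow>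
     (\<exists>L0. compact L0 \<and> (\<forall>\<^sub>F w in nhds v. \<exists>F'. F' \<subseteq> L0 \<inter> {x. s x = w} \<and> folner gm gi K (M * \<delta>) F')))"
    using stab[OF K] by (elim exE)
  have M: "M > 0" using MM by (rule conjunct1)
  have Mp: "\<exists>L0. compact L0 \<and> (\<forall>\<^sub>F w in nhds v. \<exists>F'. F' \<subseteq> L0 \<inter> {x. s x = w} \<and> folner gm gi K (M * \<delta>) F')"
    if "F \<subseteq> {x. s x = v}" "folner gm gi K \<delta> F" for F v \<delta>
    using MM that by simp
  have eM: "\<epsilon> / M > 0" using e M by simp
  obtain F0 where F0: "folner gm gi K (\<epsilon> / M) F0"
    using fa[unfolded fiberwise_amenable_def, rule_format, OF conjI[OF K eM]] by (elim exE)
  obtain v0 where F1: "folner gm gi K (\<epsilon> / M) (F0 \<inter> {x. s x = v0})"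
    using folner_fiber[OF F0 less_imp_le[OF eM]] by (elim exE)
  define F where "F = F0 \<inter> {x. s x = v0}"
  have Ffo: "folner gm gi K (\<epsilon> / M) F" using F1 by (simp only: F_def)
  have Fv: "F \<subseteq> {x. s x = v0}" by (auto simp: F_def)
  obtain L0 where L0ev: "compact L0 \<and> (\<forall>\<^sub>F w in nhds v0. \<exists>F'. F' \<subseteq> L0 \<inter> {x. s x = w} \<and> folner gm gi K (M * (\<epsilon> / M)) F')"
    using Mp[OF Fv Ffo] by (elim exE)
  have L0: "compact L0" using L0ev by (rule conjunct1)
  have MeM: "M * (\<epsilon> / M) = \<epsilon>" using M by simp
  have ev: "\<forall>\<^sub>F w in nhds v0. \<exists>F'. F' \<subseteq> L0 \<inter> {x. s x = w} \<and> folner gm gi K \<epsilon> F'"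
    using conjunct2[OF L0ev] unfolding MeM .
  obtain V where VV: "open V \<and> v0 \<in> V \<and> (\<forall>w\<in>V. \<exists>F'. F' \<subseteq> L0 \<inter> {x. s x = w} \<and> folner gm gi K \<epsilon> F')"
    using ev unfolding eventually_nhds by (elim exE)
  have V: "open V" "v0 \<in> V" using VV by auto
  have FV: "\<exists>F'. F' \<subseteq> L0 \<inter> {x. s x = w} \<and> folner gm gi K \<epsilon> F'" if "w \<in> V" for w
    using VV that by blast
  have v0u: "v0 \<in> units gm gi" "r v0 = v0" "s v0 = v0"
  proof -
    obtain f where "f \<in> F" using Ffo by (auto simp: folner_def)
    hence v: "s f = v0" by (simp add: F_def)
    have "s f \<in> units gm gi" by (rule unit_of_s)
    moreover have "r (s f) = s f" by (rule s_unit)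
    moreover have "s (s f) = s f" by (rule unit_s[OF s_unit])
    ultimately show "v0 \<in> units gm gi" "r v0 = v0" "s v0 = v0" using v by auto
  qed
  have reach: "\<exists>g. s g = u \<and> r g \<in> V" if u: "u \<in> units gm gi" for u
  proof -
    define S where "S = s ` (r -` V)"
    have oS: "open S" unfolding S_def
      by (rule open_s_image) (use open_vimage[OF V(1) cont_r] in simp)
    define D where "D = units gm gi - S"
    have "closedin (top_of_set (units gm gi)) D"
      unfolding closedin_closed D_def using oS by (intro exI[of _ "- S"]) auto
    moreover have "r ` {x. s x \<in> D} = D"
    proof
      show "r ` {x. s x \<in> D} \<subseteq> D"
      proof
        fix z assume "z \<in> r ` {x. s x \<in> D}"
        then obtain x where x: "s x \<in> D" "z = r x" by auto
        have "r x \<in> units gm gi" using r_unit unit_iff by simp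
        moreover have "r x \<notin> S"
        proof
          assume "r x \<in> S"
          then obtain g where g: "r g \<in> V" "s g = r x" unfolding S_def by auto
          have "s (gm g x) = s x" "r (gm g x) = r g" using g(2) by (auto simp: s_mult r_mult)
          hence "s x \<in> S" using g(1) unfolding S_def by (metis image_eqI vimageI)
          thus False using x(1) by (simp add: D_def)
        qed
        ultimately show "z \<in> D" using x by (simp add: D_def)
      qed
      show "D \<subseteq> r ` {x. s x \<in> D}"
      proof
        fix z assume z: "z \<in> D"
        hence "r z = z" "s z = z" using unit_iff unit_s by (auto simp: D_def)
        thus "z \<in> r ` {x. s x \<in> D}" using z by (metis (mono_tags) image_eqI mem_Collect_eq)
      qed
    qed
    ultimately have "D = {} \<or> D = units gm gi" using min unfolding minimal_groupoid_def by blast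
    moreover have "v0 \<in> S" unfolding S_def using v0u V(2) by (metis image_eqI vimageI)
    ultimately have "D = {}" using v0u(1) by (auto simp: D_def)
    hence "u \<in> S" using u by (auto simp: D_def)
    thus ?thesis unfolding S_def by auto
  qed
  define gg where "gg u = (SOME g. s g = u \<and> r g \<in> V)" for u
  have gg: "s (gg u) = u \<and> r (gg u) \<in> V" if "u \<in> units gm gi" for u
    unfolding gg_def by (rule someI_ex) (rule reach[OF that])
  define Qg :: "'g \<Rightarrow> 'g set" where "Qg u = (SOME Q. \<exists>C. open Q \<and> compact C \<and> gg u \<in> Q \<and> Q \<subseteq> C)" for u
  define Cg :: "'g \<Rightarrow> 'g set" where "Cg u = (SOME C. open (Qg u) \<and> compact C \<and> gg u \<in> Qg u \<and> Qg u \<subseteq> C)" for u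
  have QCg: "open (Qg u) \<and> compact (Cg u) \<and> gg u \<in> Qg u \<and> Qg u \<subseteq> Cg u" for u
  proof -
    have "\<exists>C. open (Qg u) \<and> compact C \<and> gg u \<in> Qg u \<and> Qg u \<subseteq> C" unfolding Qg_def
    proof (rule someI_ex)
      obtain Q C where "open Q" "compact C" "gg u \<in> Q" "Q \<subseteq> C" using lc' by blast
      thus "\<exists>Q C. open Q \<and> compact C \<and> gg u \<in> Q \<and> Q \<subseteq> C" by blast
    qed
    thus ?thesis unfolding Cg_def by (rule someI_ex)
  qed
  define W where "W u = s ` (Qg u \<inter> r -` V)" for u
  have oW: "open (W u)" for u unfolding W_def
    by (rule open_s_image) (use QCg[of u] open_vimage[OF V(1) cont_r] in auto)
  have sKu: "s ` K \<subseteq> units gm gi" using unit_of_s by blast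
  have uW: "u \<in> W u" if uK: "u \<in> s ` K" for u
  proof -
    have uu: "u \<in> units gm gi" using sKu uK by blast
    have "gg u \<in> Qg u" using QCg[of u] by blast
    moreover have "r (gg u) \<in> V" "s (gg u) = u" using gg[OF uu] by auto
    ultimately have "gg u \<in> Qg u \<inter> r -` V" "s (gg u) = u" by auto
    thus ?thesis unfolding W_def by (metis image_eqI)
  qed
  have csK: "compact (s ` K)" by (rule compact_continuous_image[OF continuous_on_subset[OF cont_s] K]) simp
  have cov: "s ` K \<subseteq> (\<Union>u\<in>s ` K. W u)" using uW by blast
  obtain P where P: "P \<subseteq> s ` K" "finite P" "s ` K \<subseteq> (\<Union>u\<in>P. W u)"
    apply (rule compactE_image[OF csK _ cov])
     apply (rule oW)
    by blast
  define Cst where "Cst = (\<Union>u\<in>P. Cg u)"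
  have cCst: "compact Cst" unfolding Cst_def using P(2) QCg by (intro compact_UN) auto
  define L where "L = setprod gm gi L0 Cst"
  have cL: "compact L"
  proof -
    have eq: "L = (\<lambda>p. gm (fst p) (snd p)) ` ((L0 \<times> Cst) \<inter> {p. s (fst p) = r (snd p)})"
    proof
      show "L \<subseteq> (\<lambda>p. gm (fst p) (snd p)) ` ((L0 \<times> Cst) \<inter> {p. s (fst p) = r (snd p)})"
      proof
        fix z assume "z \<in> L"
        then obtain x y where xy: "z = gm x y" "x \<in> L0" "y \<in> Cst" "s x = r y"
          unfolding L_def setprod_def by blast
        hence "z = (\<lambda>p. gm (fst p) (snd p)) (x, y)" "(x, y) \<in> (L0 \<times> Cst) \<inter> {p. s (fst p) = r (snd p)}"
          by auto
        thus "z \<in> (\<lambda>p. gm (fst p) (snd p)) ` ((L0 \<times> Cst) \<inter> {p. s (fst p) = r (snd p)})" by blast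
      qed
      show "(\<lambda>p. gm (fst p) (snd p)) ` ((L0 \<times> Cst) \<inter> {p. s (fst p) = r (snd p)}) \<subseteq> L"
      proof
        fix z assume "z \<in> (\<lambda>p. gm (fst p) (snd p)) ` ((L0 \<times> Cst) \<inter> {p. s (fst p) = r (snd p)})"
        then obtain a b where ab: "z = gm a b" "a \<in> L0" "b \<in> Cst" "s a = r b" by auto
        thus "z \<in> L" unfolding L_def setprod_def by blast
      qed
    qed
    have cl: "closed {p :: 'g \<times> 'g. s (fst p) = r (snd p)}"
      by (rule closed_Collect_eq)
         (auto intro!: continuous_on_compose2[OF cont_s] continuous_on_compose2[OF cont_r] continuous_intros)
    have "compact ((L0 \<times> Cst) \<inter> {p. s (fst p) = r (snd p)})"
      by (rule compact_Int_closed[OF compact_Times[OF L0 cCst] cl])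
    moreover have "continuous_on ((L0 \<times> Cst) \<inter> {p. s (fst p) = r (snd p)}) (\<lambda>p. gm (fst p) (snd p))"
      by (rule continuous_on_subset[OF cont_gm]) (auto simp: G2_iff)
    ultimately show ?thesis unfolding eq by (rule compact_continuous_image[rotated])
  qed
  show "\<exists>L. compact L \<and> (\<forall>u\<in>units gm gi. \<exists>F. F \<subseteq> {x \<in> L. s x = u} \<union> {u} \<and> folner gm gi K \<epsilon> F)"
  proof (rule exI[of _ L], intro conjI ballI)
    show "compact L" by (rule cL)
    fix u assume u: "u \<in> units gm gi"
    show "\<exists>F. F \<subseteq> {x \<in> L. s x = u} \<union> {u} \<and> folner gm gi K \<epsilon> F"
    proof (cases "u \<in> s ` K")
      case False
      have ru: "r u = u" using u unit_iff by simp
      have nK: "s y \<noteq> u" if "y \<in> K" for y using False that by auto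
      have "bdry gm gi K {u} = {}"
        unfolding bdry_def setprod_def using nK ru by auto
      hence "folner gm gi K \<epsilon> {u}" using e by (simp add: folner_def)
      thus ?thesis by blast
    next
      case True
      then obtain p where p: "p \<in> P" "u \<in> W p" using P(3) by auto
      then obtain g where g: "g \<in> Qg p" "r g \<in> V" "s g = u" unfolding W_def by auto
      have gC: "g \<in> Cst" using g(1) QCg[of p] p(1) by (auto simp: Cst_def)
      obtain F' where F': "F' \<subseteq> L0 \<inter> {x. s x = r g}" "folner gm gi K \<epsilon> F'" using FV[OF g(2)] by blast
      have "folner gm gi K \<epsilon> ((\<lambda>x. gm x g) ` F')" by (rule folner_transl) (use F' in auto)
      moreover have "(\<lambda>x. gm x g) ` F' \<subseteq> {x \<in> L. s x = u}"
      proof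
        fix z assume "z \<in> (\<lambda>x. gm x g) ` F'"
        then obtain x where x: "x \<in> F'" "z = gm x g" by auto
        have "x \<in> L0" "s x = r g" using x F'(1) by auto
        hence "z \<in> L" unfolding L_def setprod_def using x gC by blast
        moreover have "s z = u" using x \<open>s x = r g\<close> g(3) by (simp add: s_mult)
        ultimately show "z \<in> {x \<in> L. s x = u}" by simp
      qed
      ultimately show ?thesis by blast
    qed
  qed
qed

end

lemma ubiq_imp_fwa:
  fixes gm :: "'g::topological_space \<Rightarrow> 'g \<Rightarrow> 'g" and gi :: "'g \<Rightarrow> 'g"
  assumes "ubiq_fiberwise_amenable gm gi"
  shows "fiberwise_amenable gm gi"
  unfolding fiberwise_amenable_def
proof (intro allI impI)
  fix K :: "'g set" and e :: real assume H: "compact K \<and> e > 0"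
  obtain L where L: "compact L \<and> (\<forall>u\<in>units gm gi. \<exists>F. F \<subseteq> {x \<in> L. grd_s gm gi x = u} \<union> {u} \<and> folner gm gi K e F)"
    using assms[unfolded ubiq_fiberwise_amenable_def, rule_format, OF H] by (elim exE)
  have u: "grd_r gm gi undefined \<in> units gm gi" unfolding units_def by (rule rangeI)
  obtain F where "F \<subseteq> {x \<in> L. grd_s gm gi x = grd_r gm gi undefined} \<union> {grd_r gm gi undefined} \<and> folner gm gi K e F"
    using bspec[OF conjunct2[OF L] u] by (elim exE)
  thus "\<exists>F. folner gm gi K e F" by (elim conjE exI)
qed

theorem theorem4p01:
  fixes G2 :: "('g::t2_space \<times> 'g) set" and gm :: "'g \<Rightarrow> 'g \<Rightarrow> 'g" and gi :: "'g \<Rightarrow> 'g"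
  assumes "etale_groupoid G2 gm gi"
    and "locally_compact_type TYPE('g)"
    and "sigma_compact_type TYPE('g)"
    and "minimal_groupoid gm gi"
  shows "fiberwise_amenable gm gi \<longleftrightarrow> ubiq_fiberwise_amenable gm gi"
proof -
  have g: "groupoid G2 gm gi" using assms(1) unfolding etale_groupoid_def by (rule conjunct1)
  interpret egpd G2 gm gi
    using g assms(1,2) unfolding egpd_def egpd_axioms_def gpd_def by (intro conjI)
  show ?thesis using fwa_imp_ubiq[OF assms(4)] ubiq_imp_fwa by blast
qed

end
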